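(* Let $\alpha>-1$ and for $i=1,2,3,\ldots$ define the polynomials $$a_i(x)=\frac{1}{i!}\sum_{j=1}^i(-1)^{i+j+1}\binom{\alpha+1}{j-1}\binom{\alpha+2}{i-j}(\alpha+3)_{i-j}\,x^j .$$ Then for every real $x$, $$\sum_{i=1}^{\infty}a_i(x)=-\frac{\sin\pi\alpha}{\pi}\,\frac{x}{(\alpha+2)(\alpha+3)}\;{}_1F_1\!\left(\begin{matrix}1\\ \alpha+4\end{matrix};-x\right).$$ Moreover, if $\alpha\in\{0,1,2,\ldots\}$, then for every $k=1,2,3,\ldots$ $$\sum_{i=k}^{\infty}\binom{i}{k}a_i(x)=(-1)^{\alpha+k}a_k(-x);$$ in particular, for such $\alpha$, $\sum_{i=1}^\infty a_i(x)=0$ and $\sum_{i=1}^\infty i\,a_i(x)=(-1)^{\alpha+1}x$.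
   Context: $(a)_0=1$, $(a)_k=a(a+1)\cdots(a+k-1)$ is the Pochhammer symbol; $\binom{\gamma}{m}=\frac{\gamma(\gamma-1)\cdots(\gamma-m+1)}{m!}$ denotes the generalized binomial coefficient for real $\gamma$ and nonnegative integer $m$. ${}_pF_q$ denotes the generalized hypergeometric series $\sum_{k\ge0}\frac{(a_1)_k\cdots(a_p)_k}{(b_1)_k\cdots(b_q)_k}\frac{z^k}{k!}$. (These $a_i$ are the coefficients of the infinite-order differential equation $M\sum_{i\ge0}a_i(x)y^{(i)}(x)+xy''(x)+(\alpha+1-x)y'(x)+ny(x)=0$ satisfied by Koornwinder's generalized Laguerre polynomials orthogonal w.r.t. $\frac{1}{\Gamma(\alpha+1)}x^\alpha e^{-x}+M\delta(x)$.) *)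

theory Defs
  imports "HOL-Analysis.Analysis"
begin

text \<open>The coefficients a_i(x) (for i >= 1; the empty sum gives a_0 = 0, unused).\<close>
definition koorn_a :: "real \<Rightarrow> nat \<Rightarrow> real \<Rightarrow> real" where
  "koorn_a \<alpha> i x = (1 / fact i) *
     (\<Sum>j=1..i. (-1) ^ (i + j + 1) * ((\<alpha> + 1) gchoose (j - 1)) * ((\<alpha> + 2) gchoose (i - j))
                 * pochhammer (\<alpha> + 3) (i - j) * x ^ j)"

definition hyp1F1 :: "real \<Rightarrow> real \<Rightarrow> real \<Rightarrow> real" where
  "hyp1F1 a b z = (\<Sum>k. pochhammer a k / pochhammer b k * z ^ k / fact k)"

end

theory Submission
  imports Defs "HOL-Computational_Algebra.Formal_Power_Series"
begin


definition cc :: "real \<Rightarrow> nat \<Rightarrow> real" where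
  "cc \<alpha> l = (-1)^l * ((\<alpha>+2) gchoose l) * pochhammer (\<alpha>+3) l"

lemma cc_alt: "cc \<alpha> l = pochhammer (-\<alpha>-2) l * pochhammer (\<alpha>+3) l / fact l"
proof -
  have "((\<alpha>+2) gchoose l) = (-1)^l * pochhammer (-(\<alpha>+2)) l / fact l"
    by (rule gbinomial_pochhammer)
  then have "cc \<alpha> l = ((-1)^l * (-1)^l) * pochhammer (-(\<alpha>+2)) l * pochhammer (\<alpha>+3) l / fact l"
    unfolding cc_def by simp
  also have "(-1::real)^l * (-1)^l = 1" by (simp add: power_mult_distrib[symmetric])
  finally show ?thesis by simp
qed

lemma cc_0 [simp]: "cc \<alpha> 0 = 1" by (simp add: cc_def)

lemma cc_Suc: "cc \<alpha> (Suc l) = cc \<alpha> l * ((real l - \<alpha> - 2) * (real l + \<alpha> + 3) / (real l + 1))"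
  unfolding cc_alt by (simp add: pochhammer_Suc field_simps)

lemma koorn_a_alt:
  "koorn_a \<alpha> i x = - (1/fact i) * (\<Sum>j=1..i. ((\<alpha>+1) gchoose (j-1)) * cc \<alpha> (i-j) * x^j)"
proof -
  have "(\<Sum>j=1..i. (-1) ^ (i + j + 1) * ((\<alpha> + 1) gchoose (j - 1)) * ((\<alpha> + 2) gchoose (i - j))
                 * pochhammer (\<alpha> + 3) (i - j) * x ^ j)
      = (\<Sum>j=1..i. - (((\<alpha>+1) gchoose (j-1)) * cc \<alpha> (i-j) * x^j))"
  proof (rule sum.cong)
    fix j assume "j \<in> {1..i}"
    then obtain t where t: "i = j + t" using le_Suc_ex by auto
    have "(-1::real)^(i+j+1) = -((-1)^(i-j))"
      unfolding t by (simp add: power_add power_mult_distrib[symmetric])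
    then show "(-1) ^ (i + j + 1) * ((\<alpha> + 1) gchoose (j - 1)) * ((\<alpha> + 2) gchoose (i - j))
                 * pochhammer (\<alpha> + 3) (i - j) * x ^ j = - (((\<alpha>+1) gchoose (j-1)) * cc \<alpha> (i-j) * x^j)"
      by (simp add: cc_def)
  qed simp
  then show ?thesis unfolding koorn_a_def by (simp add: sum_negf)
qed



lemma rGamma_refl_real: "rGamma (x::real) * rGamma (1 - x) = sin (pi * x) / pi"
proof -
  have "complex_of_real (rGamma x * rGamma (1 - x)) = rGamma (complex_of_real x) * rGamma (1 - complex_of_real x)"
    by (simp add: rGamma_complex_of_real[symmetric])
  also have "\<dots> = sin (of_real pi * of_real x) / of_real pi" by (rule rGamma_reflection_complex)
  also have "\<dots> = complex_of_real (sin (pi * x) / pi)"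
    by (simp add: sin_of_real[symmetric])
  finally show ?thesis by (simp only: of_real_eq_iff)
qed

lemma cc_limit: "(\<lambda>n. real n * cc \<alpha> n / fact n) \<longlonglongrightarrow> - sin (pi*\<alpha>) / pi"
proof -
  let ?A = "\<lambda>n. ((\<alpha>+2) gchoose n) / ((-1)^n / exp ((\<alpha>+2+1) * of_real (ln (real n))))"
  let ?B = "\<lambda>n. ((\<alpha>+2 + of_nat n) gchoose n) * exp (-(\<alpha>+2) * of_real (ln (of_nat n)))"
  have A: "?A \<longlonglongrightarrow> inverse (Gamma (-(\<alpha>+2)))" by (rule gbinomial_asymptotic)
  have B: "?B \<longlonglongrightarrow> rGamma (\<alpha>+2+1)" by (rule Gamma_gbinomial)
  have AB: "(\<lambda>n. ?A n * ?B n) \<longlonglongrightarrow> rGamma (-(\<alpha>+2)) * rGamma (\<alpha>+3)"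
    using tendsto_mult[OF A B] by (simp add: rGamma_inverse_Gamma add_ac)
  have "rGamma (-(\<alpha>+2)) * rGamma (\<alpha>+3) = rGamma (\<alpha>+3) * rGamma (1 - (\<alpha>+3))"
    by (simp add: algebra_simps)
  also have "\<dots> = sin (pi * (\<alpha>+3)) / pi" by (rule rGamma_refl_real)
  also have "sin (pi * (\<alpha>+3)) = - sin (pi*\<alpha>)"
  proof -
    have "pi * (\<alpha>+3) = pi*\<alpha> + pi + pi + pi" by (simp add: algebra_simps)
    then show ?thesis by (simp only: sin_periodic_pi minus_minus)
  qed
  finally have lim: "(\<lambda>n. ?A n * ?B n) \<longlonglongrightarrow> - sin (pi*\<alpha>) / pi" using AB by simp
  show ?thesis
  proof (rule Lim_transform_eventually[OF lim])
    show "\<forall>\<^sub>F n in sequentially. ?A n * ?B n = real n * cc \<alpha> n / fact n"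
      using eventually_gt_at_top[of "0::nat"]
    proof eventually_elim
      case (elim n)
      have g: "((\<alpha>+2 + of_nat n) gchoose n) = pochhammer (\<alpha>+3) n / fact n"
        by (simp add: gbinomial_pochhammer' add_ac)
      have e: "exp ((\<alpha>+2+1) * ln (real n)) * exp (-(\<alpha>+2) * ln (real n)) = real n"
        using elim by (simp add: exp_add[symmetric] algebra_simps)
      have s: "1 / ((-1::real)^n) = (-1)^n"
        by (simp add: power_one_over[symmetric])
      have "?A n * ?B n = (-1)^n * ((\<alpha>+2) gchoose n) * (pochhammer (\<alpha>+3) n / fact n) *
               (exp ((\<alpha>+2+1) * ln (real n)) * exp (-(\<alpha>+2) * ln (real n)))"
        unfolding g using s by (simp add: field_simps)
      also have "\<dots> = real n * cc \<alpha> n / fact n" unfolding e cc_def by simp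
      finally show ?case .
    qed
  qed
qed



lemma tele1:
  assumes "(\<alpha>::real) > -1"
  shows "(\<Sum>l<n. cc \<alpha> l / fact (l+1)) = - real n * cc \<alpha> n / ((\<alpha>+2)*(\<alpha>+3) * fact n)"
proof (induction n)
  case 0 then show ?case by simp
next
  case (Suc n)
  have P: "(\<alpha>+2)*(\<alpha>+3) \<noteq> 0" using assms by auto
  have f: "fact (Suc n) = (real n + 1) * fact n" by simp
  have F: "fact n \<noteq> (0::real)" by simp
  have N: "real n + 1 \<noteq> 0" by linarith
  have key: "- (M - 1) * c / (Q * F) + c / (M * F)
      = - M * (c * ((M - 1 - \<alpha> - 2) * (M - 1 + \<alpha> + 3) / M)) / (Q * (M * F))"
    if "F \<noteq> 0" "M \<noteq> 0" "Q \<noteq> 0" "Q = (\<alpha>+2)*(\<alpha>+3)" for c F M Q :: real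
    using that(1-3) by (simp add: field_simps) (simp add: that(4) algebra_simps)
  show ?case
    unfolding sum.lessThan_Suc Suc.IH cc_Suc f using key[OF F N P refl] by (simp add: add.commute)
qed

lemma tele2:
  "(\<Sum>l<n. real j * cc \<alpha> l / fact (j+l) - (real j+\<alpha>+3)*(real j-\<alpha>-2) * cc \<alpha> l / fact (j+1+l))
     = - real n * cc \<alpha> n / fact (j+n)"
proof (induction n)
  case 0 then show ?case by simp
next
  case (Suc n)
  have f1: "fact (j + 1 + n) = (real j + real n + 1) * fact (j+n)"
    by (simp add: algebra_simps)
  have f2: "fact (j + Suc n) = (real j + real n + 1) * fact (j+n)"
    by (simp add: algebra_simps)
  have pos: "real j + real n + 1 \<noteq> 0" by linarith
  have F: "fact (j+n) \<noteq> (0::real)" by simp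
  have N: "real n + 1 \<noteq> 0" by linarith
  have key: "- (M - 1) * c / F + (real j * c / F - (real j+\<alpha>+3)*(real j-\<alpha>-2) * c / (G * F))
     = - M * (c * ((M - 1 - \<alpha> - 2) * (M - 1 + \<alpha> + 3) / M)) / (G * F)"
    if "F \<noteq> 0" "M \<noteq> 0" "G \<noteq> 0" "G = real j + M" for c F M G :: real
    using that(1-3) by (simp add: field_simps) (simp add: that(4) algebra_simps)
  have k2: "- real n * cc \<alpha> n / fact (j+n) + (real j * cc \<alpha> n / fact (j+n) - (real j+\<alpha>+3)*(real j-\<alpha>-2) * cc \<alpha> n / ((real j + real n + 1) * fact (j+n))) = - real (Suc n) * (cc \<alpha> n * ((real n - \<alpha> - 2) * (real n + \<alpha> + 3) / (real n + 1))) / ((real j + real n + 1) * fact (j+n))"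
    using key[OF F N pos, of "cc \<alpha> n"] by simp
  show ?case
    unfolding sum.lessThan_Suc Suc.IH cc_Suc f1 f2 by (rule k2)
qed



lemma cc_bound: "\<exists>K>0. \<forall>l. \<bar>cc \<alpha> l\<bar> / fact l \<le> K / (real l + 1)"
proof -
  have "convergent (\<lambda>n. real n * cc \<alpha> n / fact n)" using cc_limit by (auto simp: convergent_def)
  then have "Bseq (\<lambda>n. real n * cc \<alpha> n / fact n)" by (rule convergent_imp_Bseq)
  then obtain K where K: "K > 0" "\<And>n. norm (real n * cc \<alpha> n / fact n) \<le> K" by (auto simp: Bseq_def)
  show ?thesis
  proof (intro exI[of _ "1 + 2*K"] conjI allI)
    show "1 + 2*K > 0" using K by simp
    fix l
    show "\<bar>cc \<alpha> l\<bar> / fact l \<le> (1 + 2*K) / (real l + 1)"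
    proof (cases "l = 0")
      case True then show ?thesis using K by simp
    next
      case False
      then have lpos: "real l \<ge> 1" by simp
      have "real l * (\<bar>cc \<alpha> l\<bar> / fact l) \<le> K" using K(2)[of l] by (simp add: abs_mult)
      then have h: "\<bar>cc \<alpha> l\<bar> / fact l \<le> K / real l" using lpos by (simp add: field_simps)
      have kk: "K \<le> K * real l" using lpos K(1) by simp
      have "K * (real l + 1) \<le> (1 + 2*K) * real l" using kk lpos by (simp add: algebra_simps)
      then have "K / real l \<le> (1 + 2*K) / (real l + 1)" using lpos
        by (simp add: field_simps)
      then show ?thesis using h by linarith
    qed
  qed
qed

lemma inv_sq_summable: "summable (\<lambda>l. K * inverse (real (Suc l) ^ 2))"
proof -
  have "summable (\<lambda>l. inverse (real l ^ 2))" by (rule inverse_power_summable) simp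
  then have "summable (\<lambda>l. inverse (real (Suc l) ^ 2))" by (subst summable_Suc_iff)
  then show ?thesis by (rule summable_mult)
qed

lemma summ_U:
  assumes "j \<ge> 1"
  shows "summable (\<lambda>l. \<bar>cc \<alpha> l\<bar> / fact (j+l))"
proof -
  obtain K where K: "K > 0" "\<And>l. \<bar>cc \<alpha> l\<bar> / fact l \<le> K / (real l + 1)" using cc_bound by blast
  show ?thesis
  proof (rule summable_comparison_test[OF _ inv_sq_summable[of K]], intro exI allI impI)
    fix l :: nat
    have f: "fact (l+1) \<le> (fact (j+l) :: real)" using assms by (intro fact_mono) simp
    have "norm (\<bar>cc \<alpha> l\<bar> / fact (j+l)) = \<bar>cc \<alpha> l\<bar> / fact (j+l)" by simp
    also have "\<dots> \<le> \<bar>cc \<alpha> l\<bar> / fact (l+1)"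
      using f by (intro divide_left_mono) auto
    also have "\<dots> = (\<bar>cc \<alpha> l\<bar> / fact l) / (real l + 1)" by (simp add: field_simps)
    also have "\<dots> \<le> (K / (real l + 1)) / (real l + 1)"
      using K(2)[of l] by (intro divide_right_mono) auto
    also have "\<dots> = K * inverse (real (Suc l) ^ 2)" by (simp add: field_simps power2_eq_square)
    finally show "norm (\<bar>cc \<alpha> l\<bar> / fact (j+l)) \<le> K * inverse (real (Suc l) ^ 2)" .
  qed
qed

definition UU :: "real \<Rightarrow> nat \<Rightarrow> real" where
  "UU \<alpha> j = suminf (\<lambda>l. cc \<alpha> l / fact (j+l))"

lemma UU_sums: "j \<ge> 1 \<Longrightarrow> (\<lambda>l. cc \<alpha> l / fact (j+l)) sums UU \<alpha> j"
  unfolding UU_def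
  by (rule summable_sums, rule summable_rabs_cancel) (use summ_U[of j \<alpha>] in \<open>simp\<close>)

lemma UU1:
  assumes "\<alpha> > -1"
  shows "UU \<alpha> 1 = sin (pi*\<alpha>) / (pi * ((\<alpha>+2)*(\<alpha>+3)))"
proof -
  have s1: "(\<lambda>l. cc \<alpha> l / fact (1+l)) sums UU \<alpha> 1"
    using UU_sums[of 1 \<alpha>] by simp
  have e: "(\<lambda>l. cc \<alpha> l / fact (1+l)) = (\<lambda>l. cc \<alpha> l / fact (l+1))"
    by (simp only: add.commute)
  have l1: "(\<lambda>n. - real n * cc \<alpha> n / ((\<alpha>+2)*(\<alpha>+3) * fact n)) \<longlonglongrightarrow> UU \<alpha> 1"
    using s1 unfolding e sums_def tele1[OF assms] .
  have eq: "(\<lambda>n. - real n * cc \<alpha> n / ((\<alpha>+2)*(\<alpha>+3) * fact n)) = (\<lambda>n. - (real n * cc \<alpha> n / fact n) / ((\<alpha>+2)*(\<alpha>+3)))"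
    by (auto simp: divide_divide_eq_left ac_simps)
  have P: "(\<alpha>+2)*(\<alpha>+3) \<noteq> 0" using assms by auto
  have l2: "(\<lambda>n. - (real n * cc \<alpha> n / fact n) / ((\<alpha>+2)*(\<alpha>+3))) \<longlonglongrightarrow> - (- sin (pi*\<alpha>) / pi) / ((\<alpha>+2)*(\<alpha>+3))"
    by (rule tendsto_divide[OF tendsto_minus[OF cc_limit[of \<alpha>]] tendsto_const P])
  have "UU \<alpha> 1 = - (- sin (pi*\<alpha>) / pi) / ((\<alpha>+2)*(\<alpha>+3))"
    using LIMSEQ_unique[OF l1[unfolded eq] l2] .
  then show ?thesis by simp
qed

lemma UUrec:
  assumes "j \<ge> 1"
  shows "real j * UU \<alpha> j = (real j+\<alpha>+3)*(real j-\<alpha>-2) * UU \<alpha> (j+1)"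
proof -
  let ?Q = "(real j+\<alpha>+3)*(real j-\<alpha>-2)"
  have s: "(\<lambda>l. real j * cc \<alpha> l / fact (j+l) - ?Q * cc \<alpha> l / fact (j+1+l)) sums (real j * UU \<alpha> j - ?Q * UU \<alpha> (j+1))"
    using sums_diff[OF sums_mult[OF UU_sums[OF assms]] sums_mult[OF UU_sums[of "j+1"]]] assms
    by simp
  then have l1: "(\<lambda>n. - real n * cc \<alpha> n / fact (j+n)) \<longlonglongrightarrow> real j * UU \<alpha> j - ?Q * UU \<alpha> (j+1)"
    by (simp only: sums_def tele2)
  obtain K where K: "K > 0" "\<And>l. \<bar>cc \<alpha> l\<bar> / fact l \<le> K / (real l + 1)" using cc_bound by blast
  have l2: "(\<lambda>n. - real n * cc \<alpha> n / fact (j+n)) \<longlonglongrightarrow> 0"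
  proof (rule Lim_null_comparison)
    have "(\<lambda>n. K * inverse (real (Suc n))) \<longlonglongrightarrow> K * 0"
      by (intro tendsto_intros LIMSEQ_inverse_real_of_nat)
    then show "(\<lambda>n. K * inverse (real (Suc n))) \<longlonglongrightarrow> 0" by simp
    show "\<forall>\<^sub>F n in sequentially. norm (- real n * cc \<alpha> n / fact (j+n)) \<le> K * inverse (real (Suc n))"
    proof (intro always_eventually allI)
      fix n :: nat
      have f: "fact (n+1) \<le> (fact (j+n) :: real)" using assms by (intro fact_mono) simp
      have "norm (- real n * cc \<alpha> n / fact (j+n)) = real n * \<bar>cc \<alpha> n\<bar> / fact (j+n)"
        by (simp add: abs_mult)
      also have "\<dots> \<le> real n * \<bar>cc \<alpha> n\<bar> / fact (n+1)"
        using f by (intro divide_left_mono) auto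
      also have "\<dots> = real n / (real n + 1) * (\<bar>cc \<alpha> n\<bar> / fact n)" by (simp add: field_simps)
      also have "\<dots> \<le> 1 * (K / (real n + 1))"
        using K(2)[of n] by (intro mult_mono) auto
      also have "\<dots> = K * inverse (real (Suc n))" by (simp add: field_simps)
      finally show "norm (- real n * cc \<alpha> n / fact (j+n)) \<le> K * inverse (real (Suc n))" .
    qed
  qed
  from LIMSEQ_unique[OF l1 l2] show ?thesis by simp
qed

lemma alg: fixes s C0 C1 U1 U2 Q a nn al :: real
  shows "s \<noteq> 0 \<Longrightarrow> s*C1 = (a - nn)*C0 \<Longrightarrow> s*U1 = Q*U2 \<Longrightarrow> (nn+al+4)*(a-nn) = -Q \<Longrightarrow> (nn+al+4)*(C1*U2) = -(C0*U1)"
  by algebra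

lemma VV:
  assumes "\<alpha> > -1"
  shows "((\<alpha>+1) gchoose n) * UU \<alpha> (Suc n) = (-1)^n * (sin (pi*\<alpha>) / pi) / pochhammer (\<alpha>+2) (n+2)"
proof (induction n)
  case 0
  have "pochhammer (\<alpha>+2) (Suc (Suc 0)) = (\<alpha>+2)*(\<alpha>+3)"
    by (simp add: pochhammer_Suc algebra_simps)
  then show ?case using UU1[OF assms] by simp
next
  case (Suc n)
  let ?a = "\<alpha>+1"
  have g: "real (Suc n) * (?a gchoose Suc n) = (?a - real n) * (?a gchoose n)"
    using gbinomial_mult_1[of ?a n] by (simp add: algebra_simps)
  have r: "real (Suc n) * UU \<alpha> (Suc n) = (real (Suc n)+\<alpha>+3)*(real (Suc n)-\<alpha>-2) * UU \<alpha> (Suc n + 1)"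
    by (rule UUrec) simp
  have e1: "(real n + \<alpha> + 4) * ((?a gchoose Suc n) * UU \<alpha> (Suc (Suc n))) = - ((?a gchoose n) * UU \<alpha> (Suc n))"
    using r g by (intro alg[of "real (Suc n)" _ ?a "real n" _ _ "(real (Suc n)+\<alpha>+3)*(real (Suc n)-\<alpha>-2)"]) (auto simp: algebra_simps)
  have pos: "real n + \<alpha> + 4 \<noteq> 0" using assms by linarith
  have p: "pochhammer (\<alpha>+2) (Suc n + 2) = pochhammer (\<alpha>+2) (n+2) * (real n + \<alpha> + 4)"
    by (simp add: pochhammer_Suc algebra_simps)
  have "(?a gchoose Suc n) * UU \<alpha> (Suc (Suc n)) = - ((?a gchoose n) * UU \<alpha> (Suc n)) / (real n + \<alpha> + 4)"
    using e1 pos by (simp add: field_simps)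
  also have "\<dots> = (-1)^(Suc n) * (sin (pi*\<alpha>) / pi) / pochhammer (\<alpha>+2) (Suc n + 2)"
    unfolding Suc.IH p by simp
  finally show ?case .
qed



lemma tri: "(\<Sum>i<(n::nat). \<Sum>k\<le>i. F k (i-k)) = (\<Sum>k<n. \<Sum>l<n-k. F k l)"
proof -
  have "(\<Sum>k<n. \<Sum>l<n-k. F k l) = (\<Sum>(k,l)\<in>Sigma {..<n} (\<lambda>k. {..<n-k}). F k l)"
    by (rule sum.Sigma) auto
  also have "Sigma {..<n} (\<lambda>k. {..<n-k}) = {(i,j). i+j<n}" by auto
  also have "(\<Sum>(k,l)\<in>{(i,j). i+j<n}. F k l) = (\<Sum>i<n. \<Sum>k\<le>i. F k (i-k))"
    by (rule sum.triangle_reindex)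
  finally show ?thesis ..
qed

lemma koorn_shift:
  "koorn_a \<alpha> (Suc i) x = (\<Sum>k\<le>i. - ((\<alpha>+1) gchoose k) * x^(k+1) * (cc \<alpha> (i-k) / fact (k+1+(i-k))))"
proof -
  have "(\<Sum>j=1..Suc i. ((\<alpha>+1) gchoose (j-1)) * cc \<alpha> (Suc i-j) * x^j)
      = (\<Sum>k\<le>i. ((\<alpha>+1) gchoose k) * cc \<alpha> (i-k) * x^(k+1))"
  proof -
    have "(\<Sum>j=1..Suc i. ((\<alpha>+1) gchoose (j-1)) * cc \<alpha> (Suc i-j) * x^j)
        = (\<Sum>k=0..i. ((\<alpha>+1) gchoose (Suc k-1)) * cc \<alpha> (Suc i-Suc k) * x^(Suc k))"
      by (subst sum.shift_bounds_cl_Suc_ivl[symmetric]) simp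
    also have "\<dots> = (\<Sum>k\<le>i. ((\<alpha>+1) gchoose k) * cc \<alpha> (i-k) * x^(k+1))"
      by (simp add: atLeast0AtMost)
    finally show ?thesis .
  qed
  moreover have "\<And>k. k \<le> i \<Longrightarrow> fact (k+1+(i-k)) = (fact (Suc i) :: real)" by simp
  ultimately show ?thesis
    unfolding koorn_a_alt by (simp add: sum_distrib_left sum_negf algebra_simps)
qed

lemma gchoose_bound: "\<bar>(a::real) gchoose k\<bar> \<le> (\<bar>a\<bar>+1)^k"
proof (induction k)
  case 0 then show ?case by simp
next
  case (Suc k)
  have g: "real (Suc k) * (a gchoose Suc k) = (a - real k) * (a gchoose k)"
    using gbinomial_mult_1[of a k] by (simp add: algebra_simps)
  have "real (Suc k) * \<bar>a gchoose Suc k\<bar> = \<bar>a - real k\<bar> * \<bar>a gchoose k\<bar>"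
    using arg_cong[OF g, of abs] by (simp add: abs_mult)
  also have "\<dots> \<le> ((\<bar>a\<bar>+1) * real (Suc k)) * (\<bar>a\<bar>+1)^k"
  proof (rule mult_mono)
    have "\<bar>a - real k\<bar> \<le> \<bar>a\<bar> + real k" by linarith
    also have "\<dots> \<le> (\<bar>a\<bar>+1) * real (Suc k)" by (simp add: algebra_simps)
    finally show "\<bar>a - real k\<bar> \<le> (\<bar>a\<bar>+1) * real (Suc k)" .
  qed (use Suc.IH in auto)
  finally have "real (Suc k) * \<bar>a gchoose Suc k\<bar> \<le> real (Suc k) * (\<bar>a\<bar>+1)^Suc k"
    by (simp add: algebra_simps)
  then show ?case by (subst (asm) mult_le_cancel_left_pos) auto
qed

lemma fact_prod_le: "fact (k+1) * fact (l+1) \<le> (fact (k+1+l) :: real)"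
proof (induction k)
  case 0 then show ?case by simp
next
  case (Suc k)
  have "fact (Suc k + 1) * fact (l+1) = real (k+2) * (fact (k+1) * fact (l+1))" by simp
  also have "\<dots> \<le> real (k+2+l) * fact (k+1+l)"
    using Suc.IH by (intro mult_mono) auto
  also have "\<dots> = fact (Suc k + 1 + l)" by (simp add: algebra_simps)
  finally show ?case .
qed

lemma poch_mono1: "(b::real) \<ge> 1 \<Longrightarrow> pochhammer 1 k \<le> pochhammer b k"
proof (induction k)
  case 0 then show ?case by simp
next
  case (Suc k)
  then show ?case unfolding pochhammer_Suc
    by (intro mult_mono) (auto intro!: pochhammer_nonneg)
qed

lemma hyp_summable:
  assumes "\<alpha> > -1"
  shows "summable (\<lambda>k. pochhammer 1 k / pochhammer (\<alpha>+4) k * (-(x::real))^k / fact k)"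
proof (rule summable_comparison_test[OF _ summable_exp[of "\<bar>x\<bar>"]], intro exI allI impI)
  fix k :: nat
  have p1: "pochhammer 1 k = (fact k :: real)" by (simp add: pochhammer_fact)
  have pp: "pochhammer 1 k \<le> pochhammer (\<alpha>+4) k" using assms by (intro poch_mono1) simp
  have pos: "pochhammer (\<alpha>+4) k > 0" using assms by (intro pochhammer_pos) simp
  have "norm (pochhammer 1 k / pochhammer (\<alpha>+4) k * (-x)^k / fact k)
        = (pochhammer 1 k / pochhammer (\<alpha>+4) k) * (\<bar>x\<bar>^k / fact k)"
    using pos by (simp add: abs_mult power_abs p1)
  also have "\<dots> \<le> 1 * (\<bar>x\<bar>^k / fact k)"
    using pp pos by (intro mult_right_mono) auto
  finally show "norm (pochhammer 1 k / pochhammer (\<alpha>+4) k * (-x)^k / fact k) \<le> inverse (fact k) * \<bar>x\<bar>^k"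
    by (simp add: field_simps)
qed



lemma part1:
  fixes \<alpha> x :: real
  assumes al: "\<alpha> > -1"
  shows "(\<lambda>n. koorn_a \<alpha> (n + 1) x) sums
            (- (sin (pi * \<alpha>) / pi) * (x / ((\<alpha> + 2) * (\<alpha> + 3))) * hyp1F1 1 (\<alpha> + 4) (- x))"
proof -
  define s where "s = sin (pi * \<alpha>) / pi"
  define P where "P = (\<alpha> + 2) * (\<alpha> + 3)"
  define R where "R = \<bar>\<alpha>+1\<bar> + 1"
  define h where "h l = \<bar>cc \<alpha> l\<bar> / fact (1+l)" for l
  have hs: "summable h" unfolding h_def by (rule summ_U) simp
  define H where "H = suminf h"
  have h0: "h l \<ge> 0" for l unfolding h_def by simp
  have H0: "H \<ge> 0" unfolding H_def using hs h0 by (rule suminf_nonneg)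
  have R1: "R \<ge> 1" unfolding R_def by simp
  define G where "G k l = - ((\<alpha>+1) gchoose k) * x^(k+1) * (cc \<alpha> l / fact (k+1+l))" for k l
  define a where "a k n = (if k < n then (\<Sum>l<n-k. G k l) else 0)" for k n
  define b where "b k = - ((\<alpha>+1) gchoose k) * x^(k+1) * UU \<alpha> (k+1)" for k
  define M where "M k = H * ((R*\<bar>x\<bar>)^(Suc k) / fact (Suc k))" for k
  have lim: "(\<lambda>n. a k n) \<longlonglongrightarrow> b k" for k
  proof -
    have ps: "(\<lambda>m. \<Sum>l<m. cc \<alpha> l / fact (k+1+l)) \<longlonglongrightarrow> UU \<alpha> (k+1)"
      using UU_sums[of "k+1" \<alpha>] by (simp add: sums_def)
    have "(\<lambda>n. - ((\<alpha>+1) gchoose k) * x^(k+1) * (\<Sum>l<Suc n. cc \<alpha> l / fact (k+1+l))) \<longlonglongrightarrow> b k"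
      unfolding b_def by (intro tendsto_mult_left LIMSEQ_Suc ps)
    moreover have "a k (n + Suc k) = - ((\<alpha>+1) gchoose k) * x^(k+1) * (\<Sum>l<Suc n. cc \<alpha> l / fact (k+1+l))" for n
    proof -
      have "a k (n + Suc k) = (\<Sum>l<Suc n. G k l)" unfolding a_def by simp
      also have "\<dots> = - ((\<alpha>+1) gchoose k) * x^(k+1) * (\<Sum>l<Suc n. cc \<alpha> l / fact (k+1+l))"
        unfolding G_def by (simp only: sum_distrib_left)
      finally show ?thesis .
    qed
    ultimately have "(\<lambda>n. a k (n + Suc k)) \<longlonglongrightarrow> b k" by simp
    then show ?thesis by (rule LIMSEQ_offset)
  qed
  have bnd: "norm (a k n) \<le> M k" for k n
  proof (cases "k < n")
    case False
    have "M k \<ge> 0" unfolding M_def using H0 R1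
      by (intro mult_nonneg_nonneg divide_nonneg_pos zero_le_power) auto
    then show ?thesis unfolding a_def using False by simp
  next
    case True
    have "\<bar>\<Sum>l<n-k. cc \<alpha> l / fact (k+1+l)\<bar> \<le> (\<Sum>l<n-k. \<bar>cc \<alpha> l / fact (k+1+l)\<bar>)"
      by (rule sum_abs)
    also have "\<dots> \<le> (\<Sum>l<n-k. h l / fact (k+1))"
    proof (rule sum_mono)
      fix l
      have fp: "fact (k+1) * fact (l+1) \<le> (fact (k+1+l) :: real)" by (rule fact_prod_le)
      have "\<bar>cc \<alpha> l / fact (k+1+l)\<bar> = \<bar>cc \<alpha> l\<bar> / fact (k+1+l)" by simp
      also have "\<dots> \<le> \<bar>cc \<alpha> l\<bar> / (fact (k+1) * fact (l+1))"
        using fp by (intro divide_left_mono) (auto intro!: mult_pos_pos)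
      also have "\<dots> = h l / fact (k+1)" unfolding h_def by (simp add: add.commute)
      finally show "\<bar>cc \<alpha> l / fact (k+1+l)\<bar> \<le> h l / fact (k+1)" .
    qed
    also have "\<dots> = (\<Sum>l<n-k. h l) / fact (k+1)" by (simp add: sum_divide_distrib)
    also have "\<dots> \<le> H / fact (k+1)"
      unfolding H_def using hs h0 by (intro divide_right_mono sum_le_suminf) auto
    finally have s1: "\<bar>\<Sum>l<n-k. cc \<alpha> l / fact (k+1+l)\<bar> \<le> H / fact (k+1)" .
    have c1: "\<bar>(\<alpha>+1) gchoose k\<bar> \<le> R^(Suc k)"
    proof -
      have "\<bar>(\<alpha>+1) gchoose k\<bar> \<le> R^k" unfolding R_def by (rule gchoose_bound)
      also have "\<dots> \<le> R^(Suc k)" using R1 by (intro power_increasing) auto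
      finally show ?thesis .
    qed
    have "a k n = (\<Sum>l<n-k. G k l)" unfolding a_def using True by simp
    also have "\<dots> = - ((\<alpha>+1) gchoose k) * x^(k+1) * (\<Sum>l<n-k. cc \<alpha> l / fact (k+1+l))"
      unfolding G_def by (simp only: sum_distrib_left)
    finally have "norm (a k n) = \<bar>- ((\<alpha>+1) gchoose k) * x^(k+1) * (\<Sum>l<n-k. cc \<alpha> l / fact (k+1+l))\<bar>"
      by simp
    also have "\<dots> = \<bar>(\<alpha>+1) gchoose k\<bar> * \<bar>x\<bar>^(k+1) * \<bar>\<Sum>l<n-k. cc \<alpha> l / fact (k+1+l)\<bar>"
      by (simp only: abs_mult abs_minus_cancel power_abs)
    also have "\<dots> \<le> R^(Suc k) * \<bar>x\<bar>^(k+1) * (H / fact (k+1))"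
      using c1 s1 by (intro mult_mono) auto
    also have "\<dots> = M k" unfolding M_def by (simp add: power_mult_distrib)
    finally show ?thesis .
  qed
  have Ms: "summable M"
  proof -
    have "summable (\<lambda>n. inverse (fact n) * (R*\<bar>x\<bar>)^n)" by (rule summable_exp)
    then have "summable (\<lambda>n. inverse (fact (Suc n)) * (R*\<bar>x\<bar>)^(Suc n))" by (subst summable_Suc_iff)
    then have "summable (\<lambda>n. H * (inverse (fact (Suc n)) * (R*\<bar>x\<bar>)^(Suc n)))" by (rule summable_mult)
    then show ?thesis unfolding M_def by (simp add: field_simps)
  qed
  have T: "(\<lambda>n. suminf (\<lambda>k. a k n)) \<longlonglongrightarrow> suminf b"
    using tannerys_theorem[of a b sequentially M, OF lim _ Ms] bnd by (auto intro: always_eventually)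
  have pse: "suminf (\<lambda>k. a k n) = (\<Sum>i<n. koorn_a \<alpha> (i+1) x)" for n
  proof -
    have "suminf (\<lambda>k. a k n) = (\<Sum>k<n. a k n)"
      by (rule suminf_finite) (auto simp: a_def)
    also have "\<dots> = (\<Sum>k<n. \<Sum>l<n-k. G k l)" unfolding a_def by simp
    also have "\<dots> = (\<Sum>i<n. \<Sum>k\<le>i. G k (i-k))" by (rule tri[symmetric])
    also have "\<dots> = (\<Sum>i<n. koorn_a \<alpha> (i+1) x)"
      unfolding G_def by (simp add: koorn_shift)
    finally show ?thesis .
  qed
  have S1: "(\<lambda>n. koorn_a \<alpha> (n + 1) x) sums suminf b"
    using T unfolding sums_def pse .
  define t where "t k = pochhammer 1 k / pochhammer (\<alpha>+4) k * (-x)^k / fact k" for k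
  have ts: "summable t" unfolding t_def by (rule hyp_summable[OF al])
  have beq: "b k = (- s * (x / P)) * t k" for k
  proof -
    have pos: "pochhammer (\<alpha>+4) k > 0" using al by (intro pochhammer_pos) simp
    have Pn: "P \<noteq> 0" unfolding P_def using al by auto
    have pp: "pochhammer (\<alpha>+2) (k+2) = P * pochhammer (\<alpha>+4) k"
      using pochhammer_product'[of "\<alpha>+2" 2 k] unfolding P_def
      by (simp add: add.commute pochhammer_Suc numeral_2_eq_2 algebra_simps)
    have "b k = -(x^(k+1)) * (((\<alpha>+1) gchoose k) * UU \<alpha> (Suc k))" unfolding b_def by simp
    also have "\<dots> = -(x^(k+1)) * ((-1)^k * s / pochhammer (\<alpha>+2) (k+2))"
      unfolding VV[OF al] s_def by simp
    also have "\<dots> = (- s * (x / P)) * t k"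
      unfolding t_def pp using pos Pn
      by (simp add: pochhammer_fact[symmetric] power_minus' field_simps)
    finally show ?thesis .
  qed
  have "b sums ((- s * (x / P)) * suminf t)"
    unfolding beq by (rule sums_mult[OF summable_sums[OF ts]])
  then have "suminf b = (- s * (x / P)) * suminf t" by (rule sums_unique[symmetric])
  also have "\<dots> = - (sin (pi * \<alpha>) / pi) * (x / ((\<alpha> + 2) * (\<alpha> + 3))) * hyp1F1 1 (\<alpha> + 4) (- x)"
    unfolding s_def P_def t_def hyp1F1_def by simp
  finally show ?thesis using S1 by simp
qed



lemma gch_nat_zero: "k > n \<Longrightarrow> (real n gchoose k) = 0"
  by (simp add: binomial_gbinomial[symmetric])

lemma cc_int_zero: "l > m + 2 \<Longrightarrow> cc (real m) l = 0"
proof -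
  assume "l > m + 2"
  then have "(real (m+2) gchoose l) = 0" by (rule gch_nat_zero)
  then show "cc (real m) l = 0" unfolding cc_def by (simp add: add.commute)
qed

lemma C_int_zero: "q > m + 1 \<Longrightarrow> (real m + 1) gchoose q = 0"
proof -
  assume "q > m + 1"
  then have "(real (m+1) gchoose q) = 0" by (rule gch_nat_zero)
  then show ?thesis by (simp add: add.commute)
qed

definition ee :: "real \<Rightarrow> nat \<Rightarrow> nat \<Rightarrow> real" where
  "ee \<alpha> i q = (if q < i then cc \<alpha> (i - Suc q) else 0)"

lemma rep:
  "koorn_a (real m) i x = - (1 / fact i) * (\<Sum>q<m+2. ((real m + 1) gchoose q) * ee (real m) i q * x^(q+1))"
proof -
  let ?f = "\<lambda>q. ((real m + 1) gchoose q) * ee (real m) i q * x^(q+1)"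
  have "(\<Sum>j=1..i. ((real m + 1) gchoose (j-1)) * cc (real m) (i-j) * x^j)
      = (\<Sum>q<i. ((real m + 1) gchoose q) * cc (real m) (i - Suc q) * x^(Suc q))"
    using sum.atLeast1_atMost_eq[of "\<lambda>j. ((real m + 1) gchoose (j-1)) * cc (real m) (i-j) * x^j" i]
    by simp
  also have "\<dots> = (\<Sum>q<i. ?f q)"
    by (intro sum.cong) (auto simp: ee_def)
  also have "\<dots> = (\<Sum>q<i+(m+2). ?f q)"
    by (rule sum.mono_neutral_left) (auto simp: ee_def)
  also have "\<dots> = (\<Sum>q<m+2. ?f q)"
    by (rule sum.mono_neutral_right) (auto simp: C_int_zero)
  finally show ?thesis unfolding koorn_a_alt by (simp add: add.commute)
qed

lemma koorn_int_zero:
  assumes "i \<ge> 2*m+5"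
  shows "koorn_a (real m) i x = 0"
proof -
  have "ee (real m) i q = 0" if "q < m+2" for q
    using that assms unfolding ee_def by (auto intro!: cc_int_zero)
  then show ?thesis unfolding rep by simp
qed

lemma shift_sum: "(\<Sum>n<(B::nat). if e \<le> n then g (n - e) else 0) = (\<Sum>l<B-e. g l)"
proof (induction B)
  case 0 then show ?case by simp
next
  case (Suc B)
  show ?case
  proof (cases "e \<le> B")
    case True
    then have "Suc B - e = Suc (B - e)" by simp
    then show ?thesis using True Suc.IH by simp
  next
    case False
    then have "Suc B - e = 0" "B - e = 0" by auto
    then show ?thesis using False Suc.IH by simp
  qed
qed

lemma UU_int_zero:
  assumes "1 \<le> e" "e \<le> m+2"
  shows "UU (real m) e = 0"
proof -
  have v: "((real m+1) gchoose (e-1)) * UU (real m) (Suc (e-1)) = 0"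
    using VV[of "real m" "e-1"] by simp
  have "((real m+1) gchoose (e-1)) = real ((m+1) choose (e-1))"
    by (simp add: binomial_gbinomial add.commute)
  moreover have "((m+1) choose (e-1)) \<noteq> 0" using assms by simp
  ultimately have "((real m+1) gchoose (e-1)) \<noteq> 0" by simp
  with v have "UU (real m) (Suc (e-1)) = 0" by simp
  then show ?thesis using assms by simp
qed

lemma UU_int_finite:
  assumes "L \<ge> m+3"
  shows "UU (real m) e = (\<Sum>l<L. cc (real m) l / fact (e+l))"
  unfolding UU_def
  by (rule suminf_finite) (use assms in \<open>auto intro!: cc_int_zero\<close>)

lemma Wd:
  fixes m d B :: nat
  assumes dle: "d \<le> m+2" and B: "B > m+2"
  shows "(\<Sum>n<B. cc (real m) (n+d) / fact n) = (-1)^m * ((real m+2) gchoose d) * pochhammer (real m+3) d"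
proof -
  define N where "N = real m + 2"
  define c where "c = -(N + real d + 1)"
  define r where "r = m + 2 - d"
  have trm: "cc (real m) (n+d) / fact n = (-1)^d * pochhammer (N+1) d * ((N gchoose (n+d)) * (c gchoose n))" for n
  proof -
    have p: "pochhammer (N+1) (d+n) = pochhammer (N+1) d * pochhammer (N+1+real d) n"
      by (rule pochhammer_product')
    have g1: "pochhammer (N+1+real d) n / fact n = ((N + real d + real n) gchoose n)"
      by (simp add: gbinomial_pochhammer' algebra_simps)
    have g2: "((N + real d + real n) gchoose n) = (-1)^n * (c gchoose n)"
      unfolding c_def by (rule gbinomial_minus')
    have "cc (real m) (n+d) / fact n = (-1)^(n+d) * (N gchoose (n+d)) * (pochhammer (N+1) (d+n) / fact n)"
      unfolding cc_def N_def by (simp add: add.commute add.left_commute)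
    also have "\<dots> = (-1)^(n+d) * (N gchoose (n+d)) * pochhammer (N+1) d * (pochhammer (N+1+real d) n / fact n)"
      by (simp only: p mult.assoc times_divide_eq_right)
    also have "\<dots> = (-1)^(n+d) * (N gchoose (n+d)) * pochhammer (N+1) d * ((-1)^n * (c gchoose n))"
      by (simp only: g1 g2)
    also have "\<dots> = ((-1)^n * (-1)^n) * (-1)^d * pochhammer (N+1) d * ((N gchoose (n+d)) * (c gchoose n))"
      by (simp add: power_add algebra_simps)
    also have "(-1::real)^n * (-1)^n = 1" by (simp add: power_mult_distrib[symmetric])
    finally show ?thesis by simp
  qed
  have sumeq: "(\<Sum>n<B. (N gchoose (n+d)) * (c gchoose n)) = (\<Sum>n=0..r. (c gchoose n) * (N gchoose (r - n)))"
  proof -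
    have "(\<Sum>n<B. (N gchoose (n+d)) * (c gchoose n)) = (\<Sum>n\<in>{0..r}. (N gchoose (n+d)) * (c gchoose n))"
    proof (rule sum.mono_neutral_right)
      show "{0..r} \<subseteq> {..<B}" using B unfolding r_def by auto
      show "\<forall>n\<in>{..<B} - {0..r}. (N gchoose (n+d)) * (c gchoose n) = 0"
        unfolding N_def r_def using gch_nat_zero[of "m+2"] by (auto simp: add.commute)
    qed simp
    also have "\<dots> = (\<Sum>n=0..r. (c gchoose n) * (N gchoose (r - n)))"
    proof (rule sum.cong)
      fix n assume n: "n \<in> {0..r}"
      have "N gchoose (n+d) = real (m+2) gchoose (m+2 - (n+d))"
        unfolding N_def using n dle r_def by (subst gbinomial_of_nat_symmetric) (auto simp: add.commute)
      also have "m+2 - (n+d) = r - n" unfolding r_def by simp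
      finally show "(N gchoose (n+d)) * (c gchoose n) = (c gchoose n) * (N gchoose (r - n))"
        unfolding N_def by (simp add: add.commute)
    qed simp
    finally show ?thesis .
  qed
  also have "\<dots> = (c + N) gchoose r" by (rule gbinomial_Vandermonde)
  also have "c + N = - real d - 1" unfolding c_def by simp
  also have "(- real d - 1) gchoose r = (-1)^r * ((real r + real d) gchoose r)"
    by (subst gbinomial_negated_upper) simp
  also have "real r + real d = real (m+2)" unfolding r_def using dle by simp
  also have "(real (m+2) gchoose r) = real ((m+2) choose d)"
  proof -
    have "(real (m+2) gchoose r) = real ((m+2) choose r)" by (rule binomial_gbinomial[symmetric])
    also have "(m+2) choose r = (m+2) choose d" using binomial_symmetric[OF dle] unfolding r_def by simp
    finally show ?thesis .
  qed
  finally have V: "(\<Sum>n<B. (N gchoose (n+d)) * (c gchoose n)) = (-1)^r * real ((m+2) choose d)" .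
  have "(\<Sum>n<B. cc (real m) (n+d) / fact n) = (-1)^d * pochhammer (N+1) d * (\<Sum>n<B. (N gchoose (n+d)) * (c gchoose n))"
    unfolding trm by (simp add: sum_distrib_left)
  also have "\<dots> = ((-1)^d * (-1)^r) * real ((m+2) choose d) * pochhammer (N+1) d"
    unfolding V by simp
  also have "(-1::real)^d * (-1)^r = (-1)^m"
  proof -
    have "d + r = m + 2" unfolding r_def using dle by simp
    then have "(-1::real)^d * (-1)^r = (-1)^(m+2)" by (simp add: power_add[symmetric])
    then show ?thesis by simp
  qed
  also have "real ((m+2) choose d) = ((real m+2) gchoose d)"
    by (simp add: binomial_gbinomial add.commute)
  also have "N + 1 = real m + 3" unfolding N_def by simp
  finally show ?thesis by simp
qed



lemma sign_aux: "k = d + q + 1 \<Longrightarrow> (-1::real)^(m+k) * (-1)^d * (-1)^(q+1) = (-1)^m"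
proof -
  assume k: "k = d + q + 1"
  have e: "m+k+d+(q+1) = m + 2*(d+q+1)" using k by simp
  have "(-1::real)^(m+k) * (-1)^d * (-1)^(q+1) = (-1)^(m+k+d+(q+1))"
    by (simp only: power_add)
  also have "\<dots> = (-1)^(m + 2*(d+q+1))" by (simp only: e)
  also have "\<dots> = (-1)^m" by (simp add: power_add power_mult)
  finally show ?thesis .
qed

lemma perq:
  fixes m k q B :: nat
  assumes k: "k \<ge> 1" and q: "q < m+2" and B: "B \<ge> 2*m+5"
  shows "(\<Sum>n<B. ee (real m) (n+k) q / fact n) = (-1)^(m+k) * ee (real m) k q * (-1)^(q+1)"
proof (cases "q < k")
  case True
  define d where "d = k - Suc q"
  have kd: "k = d + q + 1" unfolding d_def using True by simp
  have e1: "ee (real m) (n+k) q = cc (real m) (n+d)" for n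
    unfolding ee_def using True by (simp add: d_def)
  have e2: "ee (real m) k q = cc (real m) d" unfolding ee_def using True by (simp add: d_def)
  show ?thesis
  proof (cases "d \<le> m+2")
    case True
    have "(\<Sum>n<B. ee (real m) (n+k) q / fact n) = (\<Sum>n<B. cc (real m) (n+d) / fact n)"
      by (simp add: e1)
    also have "\<dots> = (-1)^m * ((real m+2) gchoose d) * pochhammer (real m+3) d"
      by (rule Wd) (use True B in auto)
    also have "\<dots> = ((-1)^(m+k) * (-1)^d * (-1)^(q+1)) * ((real m+2) gchoose d) * pochhammer (real m+3) d"
      by (simp only: sign_aux[OF kd])
    also have "\<dots> = (-1)^(m+k) * ee (real m) k q * (-1)^(q+1)"
      unfolding e2 cc_def by (simp add: algebra_simps)
    finally show ?thesis .
  next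
    case False
    have "cc (real m) (n+d) = 0" for n using False by (intro cc_int_zero) simp
    moreover have "cc (real m) d = 0" using False by (intro cc_int_zero) simp
    ultimately show ?thesis by (simp add: e1 e2)
  qed
next
  case False
  define e where "e = Suc q - k"
  have e1: "1 \<le> e" "e \<le> m+2" unfolding e_def using False q by auto
  have t: "ee (real m) (n+k) q / fact n = (if e \<le> n then cc (real m) (n - e) / fact (e + (n - e)) else 0)" for n
    unfolding ee_def e_def using False by auto
  have "(\<Sum>n<B. ee (real m) (n+k) q / fact n) = (\<Sum>l<B-e. cc (real m) l / fact (e + l))"
    unfolding t by (rule shift_sum)
  also have "\<dots> = UU (real m) e"
    by (rule UU_int_finite[symmetric]) (use e1 B in auto)
  also have "\<dots> = 0" by (rule UU_int_zero[OF e1])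
  finally show ?thesis using False by (simp add: ee_def)
qed

lemma part2:
  fixes m k :: nat and x :: real
  assumes k: "k \<ge> 1"
  shows "(\<lambda>n. real ((n + k) choose k) * koorn_a (real m) (n + k) x) sums ((-1)^(m+k) * koorn_a (real m) k (-x))"
proof -
  define B where "B = 2*m+5"
  let ?C = "\<lambda>q. (real m + 1) gchoose q"
  let ?f = "\<lambda>n. real ((n + k) choose k) * koorn_a (real m) (n + k) x"
  have s: "?f sums (\<Sum>n<B. ?f n)"
    by (rule sums_finite) (auto simp: B_def koorn_int_zero)
  have fn: "?f n = (\<Sum>q<m+2. -(1/fact k) * (?C q * x^(q+1) * (ee (real m) (n+k) q / fact n)))" for n
  proof -
    have cf: "real ((n + k) choose k) = fact (n+k) / (fact k * fact n)"
      by (simp add: binomial_fact)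
    show ?thesis unfolding rep cf
      by (simp add: sum_distrib_left sum_negf field_simps)
  qed
  have "(\<Sum>n<B. ?f n) = (\<Sum>n<B. \<Sum>q<m+2. -(1/fact k) * (?C q * x^(q+1) * (ee (real m) (n+k) q / fact n)))"
    by (simp only: fn)
  also have "\<dots> = (\<Sum>q<m+2. \<Sum>n<B. -(1/fact k) * (?C q * x^(q+1) * (ee (real m) (n+k) q / fact n)))"
    by (rule sum.swap)
  also have "\<dots> = (\<Sum>q<m+2. -(1/fact k) * (?C q * x^(q+1) * (\<Sum>n<B. ee (real m) (n+k) q / fact n)))"
    by (simp only: sum_distrib_left)
  also have "\<dots> = (\<Sum>q<m+2. -(1/fact k) * (?C q * x^(q+1) * ((-1)^(m+k) * ee (real m) k q * (-1)^(q+1))))"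
  proof (intro sum.cong refl)
    fix q assume "q \<in> {..<m+2}"
    then have "(\<Sum>n<B. ee (real m) (n+k) q / fact n) = (-1)^(m+k) * ee (real m) k q * (-1)^(q+1)"
      by (intro perq k) (auto simp: B_def)
    then show "-(1/fact k) * (?C q * x^(q+1) * (\<Sum>n<B. ee (real m) (n+k) q / fact n))
       = -(1/fact k) * (?C q * x^(q+1) * ((-1)^(m+k) * ee (real m) k q * (-1)^(q+1)))" by simp
  qed
  also have "\<dots> = (-1)^(m+k) * koorn_a (real m) k (-x)"
    unfolding rep by (simp add: sum_distrib_left power_minus[of x] algebra_simps)
  finally show ?thesis using s by simp
qed


theorem mainTheorem1:
  fixes \<alpha> :: real
  assumes "\<alpha> > -1"
  shows "(\<forall>x::real. (\<lambda>n. koorn_a \<alpha> (n + 1) x) sums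
            (- (sin (pi * \<alpha>) / pi) * (x / ((\<alpha> + 2) * (\<alpha> + 3))) * hyp1F1 1 (\<alpha> + 4) (- x))) \<and>
         (\<forall>m::nat. \<alpha> = real m \<longrightarrow>
           (\<forall>x::real. \<forall>k::nat. k \<ge> 1 \<longrightarrow>
              (\<lambda>n. real ((n + k) choose k) * koorn_a \<alpha> (n + k) x) sums
                ((-1) ^ (m + k) * koorn_a \<alpha> k (- x)))) \<and>
         (\<forall>m::nat. \<alpha> = real m \<longrightarrow>
           (\<forall>x::real. (\<lambda>n. koorn_a \<alpha> (n + 1) x) sums 0
                   \<and> (\<lambda>n. real (n + 1) * koorn_a \<alpha> (n + 1) x) sums ((-1) ^ (m + 1) * x)))"
proof (intro conjI allI impI)
  fix x :: real
  show "(\<lambda>n. koorn_a \<alpha> (n + 1) x) sums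
            (- (sin (pi * \<alpha>) / pi) * (x / ((\<alpha> + 2) * (\<alpha> + 3))) * hyp1F1 1 (\<alpha> + 4) (- x))"
    by (rule part1[OF assms])
next
  fix m :: nat and x :: real and k :: nat
  assume a: "\<alpha> = real m" and k: "k \<ge> 1"
  show "(\<lambda>n. real ((n + k) choose k) * koorn_a \<alpha> (n + k) x) sums ((-1) ^ (m + k) * koorn_a \<alpha> k (- x))"
    unfolding a by (rule part2[OF k])
next
  fix m :: nat and x :: real
  assume a: "\<alpha> = real m"
  have "(\<lambda>n. koorn_a \<alpha> (n + 1) x) sums
            (- (sin (pi * \<alpha>) / pi) * (x / ((\<alpha> + 2) * (\<alpha> + 3))) * hyp1F1 1 (\<alpha> + 4) (- x))"
    by (rule part1[OF assms])
  then show "(\<lambda>n. koorn_a \<alpha> (n + 1) x) sums 0" unfolding a by simp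
next
  fix m :: nat and x :: real
  assume a: "\<alpha> = real m"
  have "(\<lambda>n. real ((n + 1) choose 1) * koorn_a (real m) (n + 1) x) sums ((-1) ^ (m + 1) * koorn_a (real m) 1 (- x))"
    by (rule part2) simp
  moreover have "koorn_a (real m) 1 (- x) = x" by (simp add: koorn_a_def)
  ultimately show "(\<lambda>n. real (n + 1) * koorn_a \<alpha> (n + 1) x) sums ((-1) ^ (m + 1) * x)"
    unfolding a by simp
qed

end
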